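(* Fix $\alpha\in(1,2)$ and $\beta\in[-1,1]$, and let $\phi\in C^2(\mathbb{R})$ with $\|\phi''\|_\infty<\infty$. Then for all $x,y\in\mathbb{R}$, \[ |(\mathcal{L}^{\alpha,\beta}\phi)(x)-(\mathcal{L}^{\alpha,\beta}\phi)(y)|\leqslant\frac{4d_\alpha\|\phi''\|_\infty}{\alpha(2-\alpha)(\alpha-1)}|x-y|^{2-\alpha}. \]
   Context: For $\phi\in C^2(\mathbb{R})$ with $\|\phi''\|_\infty<\infty$, \[ (\mathcal{L}^{\alpha,\beta}\phi)(x)=d_\alpha\int_{\mathbb{R}}\frac{\phi(u+x)-\phi(x)-u\phi'(x)}{2|u|^{1+\alpha}}\big[(1+\beta)\mathbf{1}_{(0,\infty)}(u)+(1-\beta)\mathbf{1}_{(-\infty,0)}(u)\big]du, \] where $d_\alpha=\big(\int_0^\infty\frac{1-\cos y}{y^{1+\alpha}}dy\big)^{-1}$. *)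

theory Defs
  imports "HOL-Analysis.Analysis"
begin

definition C2 :: "(real \<Rightarrow> real) \<Rightarrow> bool" where
  "C2 f \<longleftrightarrow> (\<forall>x. f differentiable (at x)) \<and> (\<forall>x. (deriv f) differentiable (at x))
            \<and> continuous_on UNIV (deriv (deriv f))"

definition sup_norm :: "(real \<Rightarrow> real) \<Rightarrow> real" where
  "sup_norm g = (SUP x. \<bar>g x\<bar>)"

definition d_const :: "real \<Rightarrow> real" where
  "d_const \<alpha> = inverse (LINT y:{0<..}|lborel. (1 - cos y) / y powr (1 + \<alpha>))"

definition stable_gen :: "real \<Rightarrow> real \<Rightarrow> (real \<Rightarrow> real) \<Rightarrow> real \<Rightarrow> real" where
  "stable_gen \<alpha> \<beta> \<phi> x = d_const \<alpha> *
     (LINT u|lborel. (\<phi> (u + x) - \<phi> x - u * deriv \<phi> x) / (2 * \<bar>u\<bar> powr (1 + \<alpha>))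
        * ((1 + \<beta>) * indicator {0<..} u + (1 - \<beta>) * indicator {..<0} u))"

end

theory Submission
  imports Defs
begin

lemma hk_bochner:
  fixes f :: "real \<Rightarrow> real"
  assumes m: "f \<in> borel_measurable borel" and nn: "\<And>x. 0 \<le> f x" and hi: "(f has_integral I) UNIV"
  shows "integrable lborel f \<and> integral\<^sup>L lborel f = I"
proof -
  have I0: "0 \<le> I" using has_integral_nonneg[OF hi] nn by auto
  have nn_eq: "integral\<^sup>N lborel f = I" by (rule nn_integral_has_integral_lborel[OF m nn hi])
  have int: "integrable lborel f"
    by (rule integrableI_nonneg) (use m nn nn_eq in auto)
  have "integral\<^sup>L lborel f = I"
    using integral_eq_nn_integral[of f lborel] m nn nn_eq I0 by simp
  with int show ?thesis by simp
qed

lemma K_integral: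
  fixes h \<alpha> :: real
  assumes h: "0 < h" and a1: "1 < \<alpha>" and a2: "\<alpha> < 2"
  defines "K \<equiv> \<lambda>u::real. indicator {0<..} u * (min (u^2) (h*\<bar>u\<bar>) / \<bar>u\<bar> powr (1+\<alpha>))"
  shows "integrable lborel K \<and> integral\<^sup>L lborel K = h powr (2-\<alpha>) / ((2-\<alpha>)*(\<alpha>-1))"
proof -
  have i1: "((\<lambda>u. u powr (1-\<alpha>)) has_integral (h powr (2-\<alpha>) / (2-\<alpha>))) {0..h}"
    using has_integral_powr_from_0[of "1-\<alpha>" h] a2 h by (simp add: algebra_simps)
  have i2': "((\<lambda>u. u powr (-\<alpha>)) has_integral -(h powr (1-\<alpha>)) / (1-\<alpha>)) {h..}"
    using has_integral_powr_to_inf[of "-\<alpha>" h] a1 h by (simp add: algebra_simps)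
  have i2: "((\<lambda>u. h * u powr (-\<alpha>)) has_integral (h powr (2-\<alpha>) / (\<alpha>-1))) {h..}"
  proof -
    have "h * (-(h powr (1-\<alpha>)) / (1-\<alpha>)) = h powr (2-\<alpha>) / (\<alpha>-1)"
    proof -
      have "h * h powr (1-\<alpha>) = h powr (2-\<alpha>)"
        using h by (simp add: powr_add[symmetric] powr_mult_base)
      then show ?thesis using a1 by (simp add: field_simps)
    qed
    then show ?thesis using has_integral_mult_right[OF i2', of h] by simp
  qed
  define Q where "Q \<equiv> \<lambda>u::real. (if u \<in> {0..h} then u powr (1-\<alpha>) else 0) + (if u \<in> {h..} then h * u powr (-\<alpha>) else 0)"
  have iQ: "(Q has_integral (h powr (2-\<alpha>) / (2-\<alpha>) + h powr (2-\<alpha>) / (\<alpha>-1))) UNIV"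
    unfolding Q_def
    by (intro has_integral_add; subst has_integral_restrict_UNIV) (rule i1, rule i2)
  have eqv: "h powr (2-\<alpha>) / (2-\<alpha>) + h powr (2-\<alpha>) / (\<alpha>-1) = h powr (2-\<alpha>) / ((2-\<alpha>)*(\<alpha>-1))"
    using a1 a2 by (simp add: field_simps)
  have KQ: "K u = Q u" if "u \<notin> {0, h}" for u
  proof (cases "u > 0")
    case False
    then have "K u = 0" unfolding K_def by simp
    moreover have "Q u = 0" unfolding Q_def using False that h by auto
    ultimately show ?thesis by simp
  next
    case True
    have p1: "u^2 / u powr (1+\<alpha>) = u powr (1-\<alpha>)"
    proof -
      have "u^2 = u powr 2" using True powr_realpow[of u 2] by simp
      moreover have "u powr 2 / u powr (1+\<alpha>) = u powr (2 - (1+\<alpha>))" by (rule powr_diff[symmetric])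
      ultimately show ?thesis by simp
    qed
    have p2: "h*u / u powr (1+\<alpha>) = h * u powr (-\<alpha>)"
    proof -
      have "u powr (1+\<alpha>) = u * u powr \<alpha>" using True by (simp add: powr_add)
      then show ?thesis using True by (simp add: powr_minus divide_simps)
    qed
    have Ku: "K u = min (u^2) (h*u) / u powr (1+\<alpha>)" unfolding K_def using True by simp
    show ?thesis
    proof (cases "u < h")
      case True
      with \<open>u>0\<close> have "min (u^2) (h*u) = u^2" by (simp add: power2_eq_square)
      moreover have "Q u = u powr (1-\<alpha>)" unfolding Q_def using True \<open>u>0\<close> by simp
      ultimately show ?thesis using Ku p1 by simp
    next
      case False
      with that have "u > h" by auto
      with \<open>u>0\<close> have "min (u^2) (h*u) = h*u" by (simp add: power2_eq_square)
      moreover have "Q u = h * u powr (-\<alpha>)" unfolding Q_def using \<open>u>h\<close> \<open>u>0\<close> by simp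
      ultimately show ?thesis using Ku p2 by simp
    qed
  qed
  have iK: "(K has_integral h powr (2-\<alpha>) / ((2-\<alpha>)*(\<alpha>-1))) UNIV"
    using has_integral_spike_finite[of "{0,h}" UNIV K Q] iQ eqv KQ by auto
  have mK: "K \<in> borel_measurable borel" unfolding K_def by measurable
  have nK: "0 \<le> K u" for u unfolding K_def using h by (auto simp: indicator_def intro!: divide_nonneg_nonneg)
  show ?thesis using hk_bochner[OF mK nK iK] .
qed

lemma phi_bounds:
  fixes \<phi> :: "real \<Rightarrow> real" and M :: real
  assumes c2: "C2 \<phi>" and bM: "\<And>t. \<bar>deriv (deriv \<phi>) t\<bar> \<le> M"
  shows "\<bar>\<phi> (u+x) - \<phi> x - u * deriv \<phi> x\<bar> \<le> M * u^2"
    and "\<bar>(\<phi> (u+x) - \<phi> x - u * deriv \<phi> x) - (\<phi> (u+y) - \<phi> y - u * deriv \<phi> y)\<bar>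
           \<le> 2 * M * \<bar>x - y\<bar> * \<bar>u\<bar>"
proof -
  have d1: "(\<phi> has_real_derivative deriv \<phi> t) (at t)" for t
    using c2 unfolding C2_def by (simp add: DERIV_deriv_iff_real_differentiable)
  have d2: "(deriv \<phi> has_real_derivative deriv (deriv \<phi>) t) (at t)" for t
    using c2 unfolding C2_def by (simp add: DERIV_deriv_iff_real_differentiable)
  have lip: "\<bar>deriv \<phi> a - deriv \<phi> b\<bar> \<le> M * \<bar>a - b\<bar>" for a b
    using field_differentiable_bound[of UNIV "deriv \<phi>" "deriv (deriv \<phi>)" M a b] d2 bM
    by (auto simp: has_field_derivative_at_within)
  define H where "H \<equiv> \<lambda>t. \<phi> (t+x) - t * deriv \<phi> x"
  have dH: "(H has_real_derivative (deriv \<phi> (t+x) - deriv \<phi> x)) (at t within S)" for t S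
    unfolding H_def
    by (rule has_field_derivative_at_within)
       (auto intro!: derivative_eq_intros DERIV_chain2[OF d1] simp: )
  define S where "S = {min 0 u .. max 0 u}"
  have "\<bar>H u - H 0\<bar> \<le> (M * \<bar>u\<bar>) * \<bar>u - 0\<bar>"
  proof -
    have "norm (H u - H 0) \<le> (M * \<bar>u\<bar>) * norm (u - 0)"
    proof (rule field_differentiable_bound[of S H "\<lambda>t. deriv \<phi> (t+x) - deriv \<phi> x"])
      show "convex S" unfolding S_def by simp
      show "(H has_field_derivative deriv \<phi> (z+x) - deriv \<phi> x) (at z within S)" for z by (rule dH)
      show "norm (deriv \<phi> (z+x) - deriv \<phi> x) \<le> M * \<bar>u\<bar>" if "z \<in> S" for z
      proof -
        have "\<bar>z\<bar> \<le> \<bar>u\<bar>" using that unfolding S_def by auto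
        moreover have "0 \<le> M" using bM[of 0] by linarith
        ultimately have "M * \<bar>z\<bar> \<le> M * \<bar>u\<bar>" by (simp add: mult_left_mono)
        then show ?thesis using lip[of "z+x" x] by simp
      qed
      show "u \<in> S" "0 \<in> S" unfolding S_def by auto
    qed
    then show ?thesis by simp
  qed
  then show "\<bar>\<phi> (u+x) - \<phi> x - u * deriv \<phi> x\<bar> \<le> M * u^2"
    unfolding H_def by (simp add: power2_eq_square abs_mult_self_eq)
  define H2 where "H2 \<equiv> \<lambda>t. \<phi> (t+x) - \<phi> (t+y) - t * (deriv \<phi> x - deriv \<phi> y)"
  have dH2: "(H2 has_real_derivative (deriv \<phi> (t+x) - deriv \<phi> (t+y) - (deriv \<phi> x - deriv \<phi> y))) (at t within UNIV)" for t
    unfolding H2_def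
    by (auto intro!: derivative_eq_intros DERIV_chain2[OF d1])
  have "norm (H2 u - H2 0) \<le> (2 * M * \<bar>x - y\<bar>) * norm (u - 0)"
  proof (rule field_differentiable_bound[of UNIV H2])
    show "(H2 has_field_derivative deriv \<phi> (z+x) - deriv \<phi> (z+y) - (deriv \<phi> x - deriv \<phi> y)) (at z within UNIV)" for z by (rule dH2)
    show "norm (deriv \<phi> (z+x) - deriv \<phi> (z+y) - (deriv \<phi> x - deriv \<phi> y)) \<le> 2 * M * \<bar>x - y\<bar>" for z
      using lip[of "z+x" "z+y"] lip[of x y] by simp
  qed auto
  then show "\<bar>(\<phi> (u+x) - \<phi> x - u * deriv \<phi> x) - (\<phi> (u+y) - \<phi> y - u * deriv \<phi> y)\<bar>
           \<le> 2 * M * \<bar>x - y\<bar> * \<bar>u\<bar>"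
    unfolding H2_def by (simp add: algebra_simps)
qed

theorem proposition2p2:
  fixes \<alpha> \<beta> :: real and \<phi> :: "real \<Rightarrow> real"
  assumes "1 < \<alpha>" "\<alpha> < 2" "-1 \<le> \<beta>" "\<beta> \<le> 1"
    and "C2 \<phi>"
    and "bdd_above (range (\<lambda>x. \<bar>deriv (deriv \<phi>) x\<bar>))"
  shows "\<forall>x y::real. \<bar>stable_gen \<alpha> \<beta> \<phi> x - stable_gen \<alpha> \<beta> \<phi> y\<bar>
           \<le> 4 * d_const \<alpha> * sup_norm (deriv (deriv \<phi>)) / (\<alpha> * (2 - \<alpha>) * (\<alpha> - 1))
              * \<bar>x - y\<bar> powr (2 - \<alpha>)"
proof (intro allI)
  fix x y :: real
  note a1 = assms(1) and a2 = assms(2) and b1 = assms(3) and b2 = assms(4) and c2 = assms(5)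
  define M where "M = sup_norm (deriv (deriv \<phi>))"
  define d where "d = d_const \<alpha>"
  have bM: "\<bar>deriv (deriv \<phi>) t\<bar> \<le> M" for t
    unfolding M_def sup_norm_def by (rule cSUP_upper) (use assms(6) in auto)
  have M0: "0 \<le> M" using bM[of 0] by linarith
  have d0: "0 \<le> d"
  proof -
    have "0 \<le> (LINT y:{0<..}|lborel. (1 - cos y) / y powr (1 + \<alpha>))"
      unfolding set_lebesgue_integral_def
      by (rule Bochner_Integration.integral_nonneg) (auto simp: indicator_def intro!: divide_nonneg_nonneg)
    then show ?thesis unfolding d_def d_const_def by simp
  qed
  have contphi: "continuous_on UNIV \<phi>"
    using c2 unfolding C2_def by (intro differentiable_imp_continuous_on) (auto simp: differentiable_on_def)
  have [measurable]: "\<phi> \<in> borel_measurable borel" by (rule borel_measurable_continuous_onI[OF contphi])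
  define w where "w \<equiv> \<lambda>u::real. (1 + \<beta>) * indicator {0<..} u + (1 - \<beta>) * indicator {..<0} u"
  define F where "F \<equiv> \<lambda>z u. (\<phi> (u + z) - \<phi> z - u * deriv \<phi> z) / (2 * \<bar>u\<bar> powr (1 + \<alpha>)) * w u"
  have SG: "stable_gen \<alpha> \<beta> \<phi> z = d * integral\<^sup>L lborel (F z)" for z
    unfolding stable_gen_def F_def w_def d_def by simp
  have mF[measurable]: "F z \<in> borel_measurable lborel" for z
    unfolding F_def w_def by measurable
  define RHS where "RHS = 4 * d * M / (\<alpha> * (2 - \<alpha>) * (\<alpha> - 1)) * \<bar>x - y\<bar> powr (2 - \<alpha>)"
  have RHS0: "0 \<le> RHS" unfolding RHS_def using a1 a2 d0 M0 by simp
  show "\<bar>stable_gen \<alpha> \<beta> \<phi> x - stable_gen \<alpha> \<beta> \<phi> y\<bar> \<le> 4 * d_const \<alpha> * sup_norm (deriv (deriv \<phi>)) / (\<alpha> * (2 - \<alpha>) * (\<alpha> - 1)) * \<bar>x - y\<bar> powr (2 - \<alpha>)"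
  proof (cases "x = y")
    case True then show ?thesis using RHS0 unfolding RHS_def M_def d_def by simp
  next
    case False
    define h where "h = \<bar>x - y\<bar>"
    have h0: "0 < h" using False unfolding h_def by simp
    define K where "K \<equiv> \<lambda>u::real. indicator {0<..} u * (min (u^2) (h*\<bar>u\<bar>) / \<bar>u\<bar> powr (1+\<alpha>))"
    define S0 where "S0 = h powr (2-\<alpha>) / ((2-\<alpha>)*(\<alpha>-1))"
    have K1: "integrable lborel K" and K2: "integral\<^sup>L lborel K = S0"
      using K_integral[OF h0 a1 a2] unfolding K_def S0_def by auto
    have K3: "integrable lborel (\<lambda>u. K (-u))"
      using lborel_integrable_real_affine[OF K1, of "-1" 0] by simp
    have K4: "integral\<^sup>L lborel (\<lambda>u. K (-u)) = S0"
      using lborel_integral_real_affine[of "-1" K 0] K2 by simp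
    define E where "E \<equiv> \<lambda>u. M * ((1+\<beta>) * K u + (1-\<beta>) * K (-u))"
    have E1: "integrable lborel E" unfolding E_def using K1 K3 by simp
    have E2: "integral\<^sup>L lborel E = 2 * M * S0" unfolding E_def using K1 K3 K2 K4
      by (simp add: algebra_simps)
    define D where "D \<equiv> \<lambda>u. F x u - F y u"
    have mD[measurable]: "D \<in> borel_measurable lborel" unfolding D_def by measurable
    have Dbound: "\<bar>D u\<bar> \<le> E u" for u
    proof -
      define g where "g = (\<phi> (u+x) - \<phi> x - u * deriv \<phi> x) - (\<phi> (u+y) - \<phi> y - u * deriv \<phi> y)"
      have g1: "\<bar>g\<bar> \<le> 2 * M * u^2"
        using phi_bounds(1)[OF c2 bM, of u x] phi_bounds(1)[OF c2 bM, of u y] unfolding g_def by simp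
      have g2: "\<bar>g\<bar> \<le> 2 * M * (h * \<bar>u\<bar>)"
        using phi_bounds(2)[OF c2 bM, of u x y] unfolding g_def h_def by simp
      have gm: "\<bar>g\<bar> \<le> 2 * M * min (u^2) (h*\<bar>u\<bar>)"
        using g1 g2 by (simp add: min_def)
      define q where "q = w u / (2 * \<bar>u\<bar> powr (1 + \<alpha>))"
      have q0: "0 \<le> q" unfolding q_def w_def using b1 b2 by (auto simp: indicator_def)
      have gen: "(a::real)/c*ww - b/c*ww = (a - b)*(ww/c)" for a b c ww by (simp add: left_diff_distrib diff_divide_distrib)
      have Dq: "D u = g * q" unfolding D_def F_def g_def q_def by (rule gen)
      have "\<bar>D u\<bar> = \<bar>g\<bar> * q" using Dq q0 by (simp add: abs_mult)
      also have "\<dots> \<le> 2 * M * min (u^2) (h*\<bar>u\<bar>) * q" using gm q0 by (rule mult_right_mono)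
      also have "\<dots> = E u"
      proof (cases "u > 0")
        case True then show ?thesis unfolding q_def w_def E_def K_def by (simp add: field_simps)
      next
        case False
        show ?thesis
        proof (cases "u < 0")
          case True then show ?thesis unfolding q_def w_def E_def K_def by (simp add: field_simps)
        next
          case False
          with \<open>\<not> u > 0\<close> have "u = 0" by simp
          then show ?thesis unfolding q_def w_def E_def K_def by simp
        qed
      qed
      finally show ?thesis .
    qed
    have D1: "integrable lborel D"
    proof (rule Bochner_Integration.integrable_bound[OF E1 mD])
      show "AE u in lborel. norm (D u) \<le> norm (E u)"
        by (rule AE_I2) (metis Dbound abs_ge_self order_trans real_norm_def)
    qed
    have "\<bar>integral\<^sup>L lborel (F x) - integral\<^sup>L lborel (F y)\<bar> \<le> 2 * M * S0"
    proof (cases "integrable lborel (F x)")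
      case True
      have Fy: "F y = (\<lambda>u. F x u - D u)" unfolding D_def by simp
      have iy: "integrable lborel (F y)" unfolding Fy using True D1 by simp
      have "integral\<^sup>L lborel (F x) - integral\<^sup>L lborel (F y) = integral\<^sup>L lborel D"
        unfolding D_def using True iy by simp
      moreover have "\<bar>integral\<^sup>L lborel D\<bar> \<le> integral\<^sup>L lborel E"
        by (rule integral_abs_bound_integral[OF D1 E1]) (rule Dbound)
      ultimately show ?thesis using E2 by simp
    next
      case False
      have "\<not> integrable lborel (F y)"
      proof
        assume iy: "integrable lborel (F y)"
        have "F x = (\<lambda>u. F y u + D u)" unfolding D_def by simp
        then have "integrable lborel (F x)" using iy D1 by simp
        with False show False by simp
      qed
      then have "integral\<^sup>L lborel (F x) = 0" "integral\<^sup>L lborel (F y) = 0"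
        using False not_integrable_integral_eq by auto
      moreover have "0 \<le> S0" unfolding S0_def using a1 a2 by simp
      ultimately show ?thesis using M0 by simp
    qed
    then have L: "\<bar>stable_gen \<alpha> \<beta> \<phi> x - stable_gen \<alpha> \<beta> \<phi> y\<bar> \<le> d * (2 * M * S0)"
      unfolding SG using d0
      by (simp add: right_diff_distrib[symmetric] abs_mult mult_left_mono)
    define P where "P = d * M * h powr (2-\<alpha>) / ((2-\<alpha>)*(\<alpha>-1))"
    have P0: "0 \<le> P" unfolding P_def using d0 M0 a1 a2 by simp
    have "d * (2 * M * S0) = 2 * P" unfolding P_def S0_def by simp
    also have "\<dots> \<le> (4/\<alpha>) * P"
      using P0 a1 a2 by (intro mult_right_mono) (simp_all add: field_simps)
    also have "\<dots> = 4 * d_const \<alpha> * sup_norm (deriv (deriv \<phi>)) / (\<alpha> * (2 - \<alpha>) * (\<alpha> - 1)) * \<bar>x - y\<bar> powr (2 - \<alpha>)"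
      unfolding P_def d_def M_def h_def by (simp add: field_simps)
    finally show ?thesis using L by linarith
  qed
qed

end
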